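(* Let $k\ge1$ and let $\Gamma\subset\mathbb{R}_+^k$ be a nonempty compact set of possible allocations. For every random valuation $X$ with values in $\mathbb{R}_+^k$ and finite expectation ($\mathbb{E}\|X\|<\infty$) there exists a monotonic (incentive compatible and individually rational) $\Gamma$-mechanism $\mu$ with $R(\mu;X)=\textsc{MonRev}_\Gamma(X)$.
   Context: A $\Gamma$-mechanism $\mu=(q,s)$ consists of $q:\mathbb{R}_+^k\to\Gamma$ and $s:\mathbb{R}_+^k\to\mathbb{R}$; it is IC if $q(x)\cdot x-s(x)\ge q(y)\cdot x-s(y)$ for all $x,y\in\mathbb{R}_+^k$, and IR if $q(x)\cdot x-s(x)\ge0$ for all $x\in\mathbb{R}_+^k$. It is monotonic if $s(y)\ge s(x)$ whenever $y\ge x$ (coordinatewise) in $\mathbb{R}_+^k$. The revenue is $R(\mu;X):=\mathbb{E}[s(X)]$, and $\textsc{MonRev}_\Gamma(X)$ is the supremum of $R(\mu;X)$ over all monotonic IC and IR $\Gamma$-mechanisms $\mu$. *)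

theory Defs
  imports "HOL-Probability.Probability"
begin

text \<open>The nonnegative orthant R_+^k, with k the cardinality of the finite index type 'k.\<close>
definition nonneg_orthant :: "(real^'k) set" where
  "nonneg_orthant = {x. \<forall>i. 0 \<le> x $ i}"

text \<open>A Gamma-mechanism (q,s): q maps R_+^k into Gamma (values outside R_+^k are irrelevant).\<close>
definition is_mechanism :: "(real^'k) set \<Rightarrow> (real^'k \<Rightarrow> real^'k) \<Rightarrow> (real^'k \<Rightarrow> real) \<Rightarrow> bool" where
  "is_mechanism \<Gamma> q s \<longleftrightarrow> (\<forall>x\<in>nonneg_orthant. q x \<in> \<Gamma>)"

definition mech_IC :: "(real^'k \<Rightarrow> real^'k) \<Rightarrow> (real^'k \<Rightarrow> real) \<Rightarrow> bool" where
  "mech_IC q s \<longleftrightarrow> (\<forall>x\<in>nonneg_orthant. \<forall>y\<in>nonneg_orthant.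
      q x \<bullet> x - s x \<ge> q y \<bullet> x - s y)"

definition mech_IR :: "(real^'k \<Rightarrow> real^'k) \<Rightarrow> (real^'k \<Rightarrow> real) \<Rightarrow> bool" where
  "mech_IR q s \<longleftrightarrow> (\<forall>x\<in>nonneg_orthant. q x \<bullet> x - s x \<ge> 0)"

definition mech_monotonic :: "(real^'k \<Rightarrow> real) \<Rightarrow> bool" where
  "mech_monotonic s \<longleftrightarrow> (\<forall>x\<in>nonneg_orthant. \<forall>y\<in>nonneg_orthant.
      (\<forall>i. x $ i \<le> y $ i) \<longrightarrow> s x \<le> s y)"

definition revenue :: "'a measure \<Rightarrow> ('a \<Rightarrow> real^'k) \<Rightarrow> (real^'k \<Rightarrow> real) \<Rightarrow> real" where
  "revenue M X s = integral\<^sup>L M (\<lambda>\<omega>. s (X \<omega>))"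

definition admissible_mon :: "(real^'k) set \<Rightarrow> 'a measure \<Rightarrow> ('a \<Rightarrow> real^'k)
    \<Rightarrow> (real^'k \<Rightarrow> real^'k) \<Rightarrow> (real^'k \<Rightarrow> real) \<Rightarrow> bool" where
  "admissible_mon \<Gamma> M X q s \<longleftrightarrow> is_mechanism \<Gamma> q s \<and> mech_IC q s \<and> mech_IR q s
      \<and> mech_monotonic s \<and> integrable M (\<lambda>\<omega>. s (X \<omega>))"

definition MonRev :: "(real^'k) set \<Rightarrow> 'a measure \<Rightarrow> ('a \<Rightarrow> real^'k) \<Rightarrow> real" where
  "MonRev \<Gamma> M X = Sup {revenue M X s | q s. admissible_mon \<Gamma> M X q s}"

end

theory Submission imports Defs "HOL-Library.Diagonal_Subsequence" begin

lemma inner_orth: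
  assumes "g \<in> nonneg_orthant" "x \<in> nonneg_orthant" shows "0 \<le> g \<bullet> x"
  using assms by (auto simp: inner_vec_def nonneg_orthant_def intro!: sum_nonneg)

lemma zero_orth: "0 \<in> nonneg_orthant"
  by (simp add: nonneg_orthant_def)

lemma inner_abs_le:
  assumes "norm g \<le> G" shows "\<bar>g \<bullet> x\<bar> \<le> G * norm x"
proof -
  have "\<bar>g \<bullet> x\<bar> \<le> norm g * norm x" by (rule Cauchy_Schwarz_ineq2)
  also have "\<dots> \<le> G * norm x" using assms by (simp add: mult_right_mono)
  finally show ?thesis .
qed

lemma mech_basic:
  assumes adm: "admissible_mon \<Gamma> M X q s" and sub: "\<Gamma> \<subseteq> nonneg_orthant"
    and G: "\<forall>g\<in>\<Gamma>. norm g \<le> G"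
    and x: "x \<in> nonneg_orthant" and y: "y \<in> nonneg_orthant"
  shows "q y \<bullet> x - s y \<le> q x \<bullet> x - s x" and "0 \<le> q x \<bullet> x - s x" and "q x \<in> \<Gamma>"
    and "s x \<le> G * norm x" and "s 0 \<le> 0" and "s 0 \<le> s x" and "q x \<bullet> x \<le> G * norm x"
    and "\<bar>(q x \<bullet> x - s x) - (q y \<bullet> y - s y)\<bar> \<le> G * dist x y"
proof -
  have IC: "mech_IC q s" and IR: "mech_IR q s" and mo: "mech_monotonic s" and me: "is_mechanism \<Gamma> q s"
    using adm by (auto simp: admissible_mon_def)
  show a: "q y \<bullet> x - s y \<le> q x \<bullet> x - s x" using IC x y by (auto simp: mech_IC_def)
  have b: "q x \<bullet> y - s x \<le> q y \<bullet> y - s y" using IC x y by (auto simp: mech_IC_def)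
  show "0 \<le> q x \<bullet> x - s x" using IR x by (auto simp: mech_IR_def)
  show qx: "q x \<in> \<Gamma>" using me x by (auto simp: is_mechanism_def)
  have qy: "q y \<in> \<Gamma>" using me y by (auto simp: is_mechanism_def)
  have "s 0 \<le> q 0 \<bullet> 0" using IR zero_orth by (auto simp: mech_IR_def)
  then show "s 0 \<le> 0" by simp
  show "s 0 \<le> s x" using mo x zero_orth by (auto simp: mech_monotonic_def nonneg_orthant_def)
  have qxx: "q x \<bullet> x \<le> G * norm x" using inner_abs_le[of "q x" G x] G qx by auto
  then show "q x \<bullet> x \<le> G * norm x" .
  show "s x \<le> G * norm x" using IR x qxx by (auto simp: mech_IR_def)
  have d1: "\<bar>q y \<bullet> (x - y)\<bar> \<le> G * norm (x - y)" using inner_abs_le G qy by blast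
  have d2: "\<bar>q x \<bullet> (y - x)\<bar> \<le> G * norm (x - y)" using inner_abs_le G qx by (metis norm_minus_commute)
  have e1: "q y \<bullet> x = q y \<bullet> y + q y \<bullet> (x - y)" by (simp add: inner_diff_right)
  have e2: "q x \<bullet> y = q x \<bullet> x + q x \<bullet> (y - x)" by (simp add: inner_diff_right)
  show "\<bar>(q x \<bullet> x - s x) - (q y \<bullet> y - s y)\<bar> \<le> G * dist x y"
    using a b d1 d2 e1 e2 by (simp add: dist_norm abs_le_iff)
qed

lemma diag_conv:
  fixes f :: "nat \<Rightarrow> nat \<Rightarrow> real"
  assumes bdd: "\<And>n m. \<bar>f n m\<bar> \<le> B m"
  shows "\<exists>d. strict_mono d \<and> (\<forall>m. convergent (\<lambda>k. f (d k) m))"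
proof -
  let ?P = "\<lambda>n. \<lambda>s. convergent (\<lambda>k. f (s k) n)"
  interpret nat: subseqs ?P
  proof (unfold convergent_def, unfold subseqs_def, auto)
    fix n :: nat and s :: "nat \<Rightarrow> nat" assume s: "strict_mono s"
    have "\<And>k. f (s k) n \<in> {-B n..B n}"
      using bdd by (simp add: abs_le_iff minus_le_iff)
    then have "\<exists>l s'. strict_mono s' \<and> ((\<lambda>k. f (s k) n) \<circ> s') \<longlonglongrightarrow> l"
      using compact_Icc compact_imp_seq_compact seq_compactE by metis
    thus "\<exists>s'. strict_mono (s'::nat\<Rightarrow>nat) \<and> (\<exists>l. (\<lambda>k. f (s (s' k)) n) \<longlonglongrightarrow> l)"
      by (auto simp: comp_def)
  qed
  define d where "d = nat.diagseq"
  have subseq: "strict_mono d"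
    unfolding d_def using nat.subseq_diagseq by auto
  have rat_cnv: "?P n d" for n
  proof -
    have Pn_seqseq: "?P n (nat.seqseq (Suc n))"
      by (rule nat.seqseq_holds)
    have 1: "(\<lambda>k. f ((nat.seqseq (Suc n) \<circ> (\<lambda>k. nat.fold_reduce (Suc n) k
      (Suc n + k))) k) n) = (\<lambda>k. f (nat.seqseq (Suc n) k) n) \<circ>
      (\<lambda>k. nat.fold_reduce (Suc n) k (Suc n + k))"
      by auto
    have 2: "?P n (d \<circ> ((+) (Suc n)))"
      unfolding d_def nat.diagseq_seqseq 1
      by (intro convergent_subseq_convergent Pn_seqseq nat.subseq_diagonal_rest)
    then obtain L where 3: "(\<lambda>na. f (d (na + Suc n)) n) \<longlonglongrightarrow> L"
      by (auto simp: add.commute dest: convergentD)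
    then have "(\<lambda>k. f (d k) n) \<longlonglongrightarrow> L"
      by (rule LIMSEQ_offset)
    then show ?thesis
      by (auto simp: convergent_def)
  qed
  show ?thesis using subseq rat_cnv by blast
qed

lemma lip_conv:
  fixes u :: "nat \<Rightarrow> 'b::metric_space \<Rightarrow> real"
  assumes dense: "\<And>x e. x \<in> S \<Longrightarrow> e > 0 \<Longrightarrow> \<exists>d\<in>D. dist d x < e"
    and lip: "\<And>n x y. x \<in> S \<Longrightarrow> y \<in> S \<Longrightarrow> \<bar>u n x - u n y\<bar> \<le> G * dist x y"
    and DS: "D \<subseteq> S" and cD: "\<And>d. d \<in> D \<Longrightarrow> convergent (\<lambda>k. u k d)"
    and x: "x \<in> S" and G: "0 \<le> G"
  shows "convergent (\<lambda>k. u k x)"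
proof -
  have "Cauchy (\<lambda>k. u k x)"
  proof (rule CauchyI)
    fix e :: real assume e: "0 < e"
    define G' where "G' = G + 1"
    have G': "0 < G'" using G by (simp add: G'_def)
    obtain d where d: "d \<in> D" "dist d x < e / (3 * G')" using dense[OF x, of "e/(3*G')"] e G' by auto
    have "Cauchy (\<lambda>k. u k d)" using cD[OF d(1)] by (simp add: convergent_Cauchy)
    then obtain N where N: "\<And>m n. m \<ge> N \<Longrightarrow> n \<ge> N \<Longrightarrow> norm (u m d - u n d) < e/3"
      using e by (metis CauchyD divide_pos_pos zero_less_numeral)
    have dS: "d \<in> S" using d DS by auto
    have Gd: "G * dist x d \<le> e / 3"
    proof -
      have "G * dist x d \<le> G' * dist x d" by (simp add: G'_def mult_right_mono)
      also have "\<dots> \<le> G' * (e / (3 * G'))" using d(2) G' by (intro mult_left_mono) (auto simp: dist_commute)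
      also have "\<dots> = e / 3" using G' by simp
      finally show ?thesis .
    qed
    show "\<exists>M. \<forall>m\<ge>M. \<forall>n\<ge>M. norm (u m x - u n x) < e"
    proof (intro exI allI impI)
      fix m n assume "m \<ge> N" "n \<ge> N"
      then have "norm (u m d - u n d) < e/3" by (rule N)
      moreover have "\<bar>u m x - u m d\<bar> \<le> G * dist x d" using lip x dS by blast
      moreover have "\<bar>u n x - u n d\<bar> \<le> G * dist x d" using lip x dS by blast
      ultimately show "norm (u m x - u n x) < e" using Gd by (simp only: real_norm_def abs_le_iff abs_less_iff) linarith
    qed
  qed
  then show ?thesis by (simp add: Cauchy_convergent_iff)
qed

theorem theorem2:
  fixes \<Gamma> :: "(real^'k) set" and M :: "'a measure" and X :: "'a \<Rightarrow> real^'k"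
  assumes "prob_space M"
    and "\<Gamma> \<noteq> {}" and "compact \<Gamma>" and "\<Gamma> \<subseteq> nonneg_orthant"
    and "X \<in> borel_measurable M"
    and "\<forall>\<omega>\<in>space M. X \<omega> \<in> nonneg_orthant"
    and "integrable M (\<lambda>\<omega>. norm (X \<omega>))"
  shows "\<exists>q s. admissible_mon \<Gamma> M X q s \<and> revenue M X s = MonRev \<Gamma> M X"
proof -
  note Pm = assms(1)
  interpret P: prob_space M by fact
  note Gne = assms(2) and Gc = assms(3) and sub = assms(4) and Xm = assms(5)
    and XO = assms(6) and Xint = assms(7)
  obtain G where G: "\<forall>g\<in>\<Gamma>. norm g \<le> G"
    using compact_imp_bounded[OF Gc] by (auto simp: bounded_iff)
  obtain g0 where g0: "g0 \<in> \<Gamma>" using Gne by auto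
  have G0: "0 \<le> G" using G g0 norm_ge_zero order_trans by blast
  define R where "R = {revenue M X s |q s. admissible_mon \<Gamma> M X q s}"
  have MR: "MonRev \<Gamma> M X = Sup R" by (simp add: MonRev_def R_def)
  have adm0: "admissible_mon \<Gamma> M X (\<lambda>_. g0) (\<lambda>_. 0)"
    unfolding admissible_mon_def is_mechanism_def mech_IC_def mech_IR_def mech_monotonic_def
    using g0 sub inner_orth by auto
  have Rne: "R \<noteq> {}" using adm0 by (auto simp: R_def)
  have intXn: "integrable M (\<lambda>\<omega>. G * norm (X \<omega>))" using Xint by (rule integrable_mult_right)
  have rev_le: "revenue M X s \<le> integral\<^sup>L M (\<lambda>\<omega>. G * norm (X \<omega>))"
    if a: "admissible_mon \<Gamma> M X q s" for q s
    unfolding revenue_def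
  proof (rule integral_mono)
    show "integrable M (\<lambda>\<omega>. s (X \<omega>))" using a by (simp add: admissible_mon_def)
    show "integrable M (\<lambda>\<omega>. G * norm (X \<omega>))" by (rule intXn)
    fix \<omega> assume "\<omega> \<in> space M"
    then show "s (X \<omega>) \<le> G * norm (X \<omega>)" using mech_basic(4)[OF a sub G] XO by blast
  qed
  have bdd: "bdd_above R" unfolding R_def bdd_above_def using rev_le by blast
  have rev_MR: "revenue M X s \<le> MonRev \<Gamma> M X" if a: "admissible_mon \<Gamma> M X q s" for q s
    unfolding MR using a by (intro cSup_upper bdd) (auto simp: R_def)
  have normalize: "admissible_mon \<Gamma> M X q (\<lambda>x. s x - s 0) \<and> revenue M X s \<le> revenue M X (\<lambda>x. s x - s 0)"
    if a: "admissible_mon \<Gamma> M X q s" for q s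
  proof
    have s0: "s 0 \<le> 0" using mech_basic(5)[OF a sub G zero_orth zero_orth] .
    have IR': "0 \<le> q x \<bullet> x - (s x - s 0)" if x: "x \<in> nonneg_orthant" for x
    proof -
      have "q 0 \<bullet> x - s 0 \<le> q x \<bullet> x - s x" using mech_basic(1)[OF a sub G x zero_orth] .
      moreover have "0 \<le> q 0 \<bullet> x" using inner_orth mech_basic(3)[OF a sub G zero_orth zero_orth] sub x by blast
      ultimately show ?thesis by simp
    qed
    have int: "integrable M (\<lambda>\<omega>. s (X \<omega>))" using a by (simp add: admissible_mon_def)
    show "admissible_mon \<Gamma> M X q (\<lambda>x. s x - s 0)"
      using a IR' int unfolding admissible_mon_def is_mechanism_def mech_IC_def mech_IR_def mech_monotonic_def
      by auto
    have "revenue M X (\<lambda>x. s x - s 0) = revenue M X s - s 0"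
      unfolding revenue_def using int by (simp add: P.prob_space)
    then show "revenue M X s \<le> revenue M X (\<lambda>x. s x - s 0)" using s0 by simp
  qed
  have "\<forall>n. \<exists>p. admissible_mon \<Gamma> M X (fst p) (snd p) \<and> snd p 0 = 0
      \<and> MonRev \<Gamma> M X - inverse (real (Suc n)) < revenue M X (snd p)"
  proof
    fix n
    have "MonRev \<Gamma> M X - inverse (real (Suc n)) < Sup R" unfolding MR by simp
    then obtain r where "r \<in> R" "MonRev \<Gamma> M X - inverse (real (Suc n)) < r"
      using less_cSup_iff[OF Rne bdd] by blast
    then obtain q s where a: "admissible_mon \<Gamma> M X q s" and r: "MonRev \<Gamma> M X - inverse (real (Suc n)) < revenue M X s"
      by (auto simp: R_def)
    show "\<exists>p. admissible_mon \<Gamma> M X (fst p) (snd p) \<and> snd p 0 = 0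
      \<and> MonRev \<Gamma> M X - inverse (real (Suc n)) < revenue M X (snd p)"
      using normalize[OF a] r by (intro exI[of _ "(q, \<lambda>x. s x - s 0)"]) auto
  qed
  then obtain p where p: "\<And>n. admissible_mon \<Gamma> M X (fst (p n)) (snd (p n))"
    "\<And>n. snd (p n) 0 = 0" "\<And>n. MonRev \<Gamma> M X - inverse (real (Suc n)) < revenue M X (snd (p n))"
    by metis
  define qn where "qn n = fst (p n)" for n
  define sn where "sn n = snd (p n)" for n
  define un where "un n x = qn n x \<bullet> x - sn n x" for n x
  have admn: "admissible_mon \<Gamma> M X (qn n) (sn n)" for n using p(1) by (simp add: qn_def sn_def)
  have sn0: "sn n 0 = 0" for n using p(2) by (simp add: sn_def)
  have revn: "MonRev \<Gamma> M X - inverse (real (Suc n)) < revenue M X (sn n)" for n using p(3) by (simp add: sn_def)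
  note mb = mech_basic[OF admn sub G]
  have sn_bnd: "0 \<le> sn n x" "sn n x \<le> G * norm x" if "x \<in> nonneg_orthant" for n x
    using mb(6,4)[OF that that] sn0 by auto
  have un_bnd: "0 \<le> un n x" "un n x \<le> G * norm x" if "x \<in> nonneg_orthant" for n x
    using mb(2)[OF that that, of n] mb(7)[OF that that, of n] sn_bnd[OF that, of n] unfolding un_def by linarith+
  have un_lip: "\<bar>un n x - un n y\<bar> \<le> G * dist x y" if "x \<in> nonneg_orthant" "y \<in> nonneg_orthant" for n x y
    using mb(8)[OF that] unfolding un_def .
  have un_IC: "qn n y \<bullet> x - sn n y \<le> un n x" if "x \<in> nonneg_orthant" "y \<in> nonneg_orthant" for n x y
    using mb(1)[OF that] unfolding un_def .
  obtain D :: "(real^'k) set" where D: "countable D" "D \<subseteq> nonneg_orthant" "nonneg_orthant \<subseteq> closure D"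
    using separable by blast
  have Dne: "D \<noteq> {}" using D(3) zero_orth by auto
  define e where "e = from_nat_into D"
  have eD: "e m \<in> D" for m using from_nat_into[OF Dne] by (simp add: e_def)
  have rangee: "range e = D" using range_from_nat_into[OF Dne D(1)] by (simp add: e_def)
  obtain d where d: "strict_mono d" "\<And>m. convergent (\<lambda>k. un (d k) (e m))"
  proof -
    have "\<exists>d. strict_mono d \<and> (\<forall>m. convergent (\<lambda>k. un (d k) (e m)))"
    proof (rule diag_conv[where B="\<lambda>m. G * norm (e m)"])
      fix n m
      have em: "e m \<in> nonneg_orthant" using eD D(2) by blast
      show "\<bar>un (d' n) (e m)\<bar> \<le> G * norm (e m)" for d' :: "nat \<Rightarrow> nat"
        using un_bnd[OF em, of "d' n"] by simp
    qed
    then show ?thesis using that by blast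
  qed
  have conv: "convergent (\<lambda>k. un (d k) x)" if x: "x \<in> nonneg_orthant" for x
  proof (rule lip_conv[where S=nonneg_orthant and D=D and G=G])
    show "\<exists>y\<in>D. dist y x < \<epsilon>" if "x \<in> nonneg_orthant" "\<epsilon> > 0" for x \<epsilon>
      using that D(3) closure_approachable by blast
    show "\<bar>un (d n) x - un (d n) y\<bar> \<le> G * dist x y" if "x \<in> nonneg_orthant" "y \<in> nonneg_orthant" for n x y
      using un_lip that by blast
    show "convergent (\<lambda>k. un (d k) y)" if "y \<in> D" for y
      using d(2) that rangee by (metis imageE)
  qed (use x D G0 in auto)
  define U where "U x = lim (\<lambda>k. un (d k) x)" for x
  have U_lim: "(\<lambda>k. un (d k) x) \<longlonglongrightarrow> U x" if "x \<in> nonneg_orthant" for x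
    using conv[OF that] by (simp add: U_def convergent_LIMSEQ_iff)
  have U_nn: "0 \<le> U x" if "x \<in> nonneg_orthant" for x
    using U_lim[OF that] un_bnd(1)[OF that] by (intro LIMSEQ_le_const) auto
  define s where "s x = enn2real (limsup (\<lambda>k. ennreal (sn (d k) x)))" for x
  have ls_bnd: "limsup (\<lambda>k. ennreal (sn (d k) x)) \<le> ennreal (G * norm x)" if "x \<in> nonneg_orthant" for x
    using sn_bnd[OF that] by (intro Limsup_bounded always_eventually allI ennreal_leI) auto
  have ls_fin: "limsup (\<lambda>k. ennreal (sn (d k) x)) < top" if "x \<in> nonneg_orthant" for x
    using ls_bnd[OF that] by (simp add: order.strict_trans1)
  have ls_eq: "limsup (\<lambda>k. ennreal (sn (d k) x)) = ennreal (s x)" if "x \<in> nonneg_orthant" for x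
    using ls_fin[OF that] by (simp add: s_def)
  have s_nn: "0 \<le> s x" for x by (simp add: s_def)
  have s_bnd: "s x \<le> G * norm x" if "x \<in> nonneg_orthant" for x
    using ls_bnd[OF that] ls_eq[OF that] G0 by simp
  have ex_q: "\<exists>g. g \<in> \<Gamma> \<and> (\<forall>y\<in>nonneg_orthant. g \<bullet> y - s x \<le> U y) \<and> g \<bullet> x - s x = U x"
    if x: "x \<in> nonneg_orthant" for x
  proof -
    obtain r2 :: "nat \<Rightarrow> nat" where r2: "strict_mono r2"
      "((\<lambda>k. ennreal (sn (d k) x)) \<circ> r2) \<longlonglongrightarrow> limsup (\<lambda>k. ennreal (sn (d k) x))"
      using limsup_subseq_lim by blast
    have "(\<lambda>j. enn2real (ennreal (sn (d (r2 j)) x))) \<longlonglongrightarrow> s x"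
      using r2(2) ls_eq[OF x] s_nn by (intro tendsto_enn2real) (auto simp: o_def)
    then have sl: "(\<lambda>j. sn (d (r2 j)) x) \<longlonglongrightarrow> s x"
      using sn_bnd(1)[OF x] by simp
    have "\<forall>j. qn (d (r2 j)) x \<in> \<Gamma>" using mb(3)[OF x x] by blast
    then obtain g r3 where g: "g \<in> \<Gamma>" "strict_mono (r3 :: nat \<Rightarrow> nat)"
      "((\<lambda>j. qn (d (r2 j)) x) \<circ> r3) \<longlonglongrightarrow> g"
      using compact_imp_seq_compact[OF Gc] seq_compactE by metis
    have lim_s: "(\<lambda>j. sn (d (r2 (r3 j))) x) \<longlonglongrightarrow> s x"
      using LIMSEQ_subseq_LIMSEQ[OF sl g(2)] by (simp add: o_def)
    have lim_q: "(\<lambda>j. qn (d (r2 (r3 j))) x) \<longlonglongrightarrow> g" using g(3) by (simp add: o_def)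
    have sm: "strict_mono (\<lambda>j. r2 (r3 j))" using strict_mono_o[OF r2(1) g(2)] by (simp add: o_def)
    have lim_u: "(\<lambda>j. un (d (r2 (r3 j))) y) \<longlonglongrightarrow> U y" if y: "y \<in> nonneg_orthant" for y
      using LIMSEQ_subseq_LIMSEQ[OF U_lim[OF y] sm] by (simp add: o_def)
    have ineq: "\<forall>y\<in>nonneg_orthant. g \<bullet> y - s x \<le> U y"
    proof
      fix y :: "real^'k" assume y: "y \<in> nonneg_orthant"
      have "(\<lambda>j. qn (d (r2 (r3 j))) x \<bullet> y - sn (d (r2 (r3 j))) x) \<longlonglongrightarrow> g \<bullet> y - s x"
        by (intro tendsto_intros lim_q lim_s)
      then show "g \<bullet> y - s x \<le> U y"
        using lim_u[OF y] un_IC[OF y x] by (intro LIMSEQ_le) auto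
    qed
    have "(\<lambda>j. un (d (r2 (r3 j))) x) \<longlonglongrightarrow> g \<bullet> x - s x"
      unfolding un_def by (intro tendsto_intros lim_q lim_s)
    then have "g \<bullet> x - s x = U x" using lim_u[OF x] LIMSEQ_unique by blast
    then show ?thesis using g(1) ineq by blast
  qed
  define q where "q x = (SOME g. g \<in> \<Gamma> \<and> (\<forall>y\<in>nonneg_orthant. g \<bullet> y - s x \<le> U y) \<and> g \<bullet> x - s x = U x)" for x
  have q: "q x \<in> \<Gamma>" "\<forall>y\<in>nonneg_orthant. q x \<bullet> y - s x \<le> U y" "q x \<bullet> x - s x = U x"
    if "x \<in> nonneg_orthant" for x
    using someI_ex[OF ex_q[OF that]] unfolding q_def by blast+
  have [measurable]: "(\<lambda>\<omega>. sn k (X \<omega>)) \<in> borel_measurable M" for k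
    using admn[of k] by (auto simp: admissible_mon_def)
  have meas: "(\<lambda>\<omega>. s (X \<omega>)) \<in> borel_measurable M"
    unfolding s_def by measurable
  have int: "integrable M (\<lambda>\<omega>. s (X \<omega>))"
  proof (rule Bochner_Integration.integrable_bound[OF intXn meas])
    show "AE \<omega> in M. norm (s (X \<omega>)) \<le> norm (G * norm (X \<omega>))"
      using XO s_bnd s_nn G0 by (intro AE_I2) auto
  qed
  have adm: "admissible_mon \<Gamma> M X q s"
    unfolding admissible_mon_def is_mechanism_def mech_IC_def mech_IR_def mech_monotonic_def
  proof (intro conjI ballI impI int)
    fix x :: "real^'k" assume "x \<in> nonneg_orthant" then show "q x \<in> \<Gamma>" using q by blast
  next
    fix x y :: "real^'k" assume x: "x \<in> nonneg_orthant" and y: "y \<in> nonneg_orthant"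
    show "q y \<bullet> x - s y \<le> q x \<bullet> x - s x" using q(2)[OF y] q(3)[OF x] x by auto
  next
    fix x :: "real^'k" assume x: "x \<in> nonneg_orthant" then show "0 \<le> q x \<bullet> x - s x" using q(3) U_nn by auto
  next
    fix x y :: "real^'k" assume x: "x \<in> nonneg_orthant" and y: "y \<in> nonneg_orthant" and le: "\<forall>i. x $ i \<le> y $ i"
    have "\<forall>k. sn (d k) x \<le> sn (d k) y" using admn le x y
      by (auto simp: admissible_mon_def mech_monotonic_def)
    then have "limsup (\<lambda>k. ennreal (sn (d k) x)) \<le> limsup (\<lambda>k. ennreal (sn (d k) y))"
      by (intro Limsup_mono always_eventually) (auto intro: ennreal_leI)
    then show "s x \<le> s y" using ls_eq[OF x] ls_eq[OF y] s_nn by simp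
  qed
  have "MonRev \<Gamma> M X \<le> revenue M X s"
  proof -
    define f where "f k \<omega> = sn (d k) (X \<omega>)" for k \<omega>
    have f_bnd: "0 \<le> f k \<omega>" "f k \<omega> \<le> G * norm (X \<omega>)" if "\<omega> \<in> space M" for k \<omega>
      using sn_bnd[OF XO[rule_format, OF that]] by (auto simp: f_def)
    have fint: "integrable M (f k)" for k
      using admn[of "d k"] unfolding f_def[abs_def] by (simp add: admissible_mon_def)
    have [measurable]: "f k \<in> borel_measurable M" for k using fint by auto
    have rev_f: "revenue M X (sn (d k)) = integral\<^sup>L M (f k)" for k
      unfolding f_def[abs_def] by (simp add: revenue_def)
    have lim_rev: "(\<lambda>k. integral\<^sup>L M (f k)) \<longlonglongrightarrow> MonRev \<Gamma> M X"
    proof (rule tendsto_sandwich[where f="\<lambda>n. MonRev \<Gamma> M X - inverse (real (Suc n))"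
          and h="\<lambda>n. MonRev \<Gamma> M X"])
      show "\<forall>\<^sub>F n in sequentially. MonRev \<Gamma> M X - inverse (real (Suc n)) \<le> integral\<^sup>L M (f n)"
      proof (intro always_eventually allI)
        fix n
        have "n \<le> d n" using seq_suble[OF d(1)] .
        then have "inverse (real (Suc (d n))) \<le> inverse (real (Suc n))"
          by (intro le_imp_inverse_le) auto
        then show "MonRev \<Gamma> M X - inverse (real (Suc n)) \<le> integral\<^sup>L M (f n)"
          using revn[of "d n"] rev_f[of n] by linarith
      qed
      show "\<forall>\<^sub>F n in sequentially. integral\<^sup>L M (f n) \<le> MonRev \<Gamma> M X"
        using rev_MR[OF admn] rev_f by (intro always_eventually allI) metis
      have "(\<lambda>n. MonRev \<Gamma> M X - inverse (real (Suc n))) \<longlonglongrightarrow> MonRev \<Gamma> M X - 0"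
        by (intro tendsto_intros LIMSEQ_inverse_real_of_nat)
      then show "(\<lambda>n. MonRev \<Gamma> M X - inverse (real (Suc n))) \<longlonglongrightarrow> MonRev \<Gamma> M X" by simp
    qed auto
    have A: "limsup (\<lambda>k. \<integral>\<^sup>+\<omega>. ennreal (f k \<omega>) \<partial>M) \<le> (\<integral>\<^sup>+\<omega>. limsup (\<lambda>k. ennreal (f k \<omega>)) \<partial>M)"
    proof (rule nn_integral_limsup[where w="\<lambda>\<omega>. ennreal (G * norm (X \<omega>))"])
      show "(\<lambda>\<omega>. ennreal (G * norm (X \<omega>))) \<in> borel_measurable M" using Xm by measurable
      show "AE \<omega> in M. ennreal (f i \<omega>) \<le> ennreal (G * norm (X \<omega>))" for i
        using f_bnd by (intro AE_I2 ennreal_leI) auto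
      have "(\<integral>\<^sup>+\<omega>. ennreal (G * norm (X \<omega>)) \<partial>M) = ennreal (integral\<^sup>L M (\<lambda>\<omega>. G * norm (X \<omega>)))"
        using intXn G0 by (intro nn_integral_eq_integral AE_I2) auto
      then show "(\<integral>\<^sup>+\<omega>. ennreal (G * norm (X \<omega>)) \<partial>M) < \<infinity>" by simp
    qed measurable
    have B: "(\<integral>\<^sup>+\<omega>. ennreal (f k \<omega>) \<partial>M) = ennreal (integral\<^sup>L M (f k))" for k
      using fint f_bnd by (intro nn_integral_eq_integral AE_I2) auto
    have C: "limsup (\<lambda>k. \<integral>\<^sup>+\<omega>. ennreal (f k \<omega>) \<partial>M) = ennreal (MonRev \<Gamma> M X)"
      unfolding B by (intro lim_imp_Limsup tendsto_ennrealI lim_rev) simp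
    have E: "(\<integral>\<^sup>+\<omega>. limsup (\<lambda>k. ennreal (f k \<omega>)) \<partial>M) = (\<integral>\<^sup>+\<omega>. ennreal (s (X \<omega>)) \<partial>M)"
      using ls_eq XO by (intro nn_integral_cong) (simp add: f_def)
    have F: "(\<integral>\<^sup>+\<omega>. ennreal (s (X \<omega>)) \<partial>M) = ennreal (revenue M X s)"
      unfolding revenue_def using int s_nn by (intro nn_integral_eq_integral AE_I2) auto
    have "ennreal (MonRev \<Gamma> M X) \<le> ennreal (revenue M X s)"
      using A C E F by simp
    moreover have "0 \<le> revenue M X s" unfolding revenue_def using s_nn by (intro integral_nonneg_AE AE_I2) auto
    ultimately show ?thesis by simp
  qed
  then show ?thesis using adm rev_MR[OF adm] by (intro exI[of _ q] exI[of _ s]) auto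
qed

end
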